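(* Let $W:\mathbb{N}^\star\times\mathbb{N}^\star\to\mathbb{C}$ be such that $F\,\square_W\,G\in\mathbb{M}$ and $F\,\square_W\,G=G\,\square_W\,F$ for all $F,G\in\mathbb{M}$. Then there exists $E\in\mathbb{M}$ with $F\,\square_W\,E=E\,\square_W\,F=F$ for all $F\in\mathbb{M}$ if and only if $W(1,p^n)=1$ for every prime $p$ and every integer $n\ge0$; in that case $E=\delta_1$.
   Context: $\mathbb{M}$ is the set of functions $F:\mathbb{N}^\star\to\mathbb{C}$ with $F(1)=1$ and $F(ab)=F(a)F(b)$ whenever $\gcd(a,b)=1$. For a weight $W$, $(F\,\square_W\,G)(m)=\sum_{ab=m}F(a)G(b)W(a,b)$. $\delta_1$ is the function with $\delta_1(1)=1$ and $\delta_1(n)=0$ for $n\ge2$. *)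

theory Defs
  imports "HOL-Computational_Algebra.Primes" Complex_Main
begin

text \<open>Functions on the positive integers are modelled as nat \<Rightarrow> complex;
  the value at 0 is irrelevant and never constrained.\<close>

definition multM :: "(nat \<Rightarrow> complex) set" where
  "multM = {F. F 1 = 1 \<and>
     (\<forall>a b. a > 0 \<longrightarrow> b > 0 \<longrightarrow> coprime a b \<longrightarrow> F (a * b) = F a * F b)}"

definition wconv :: "(nat \<Rightarrow> nat \<Rightarrow> complex) \<Rightarrow> (nat \<Rightarrow> complex) \<Rightarrow> (nat \<Rightarrow> complex) \<Rightarrow> nat \<Rightarrow> complex" where
  "wconv W F G m = (if m = 0 then 0 else
     (\<Sum>a\<in>{a. a dvd m}. F a * G (m div a) * W a (m div a)))"

definition delta1 :: "nat \<Rightarrow> complex" where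
  "delta1 n = (if n = 1 then 1 else 0)"

end

theory Submission
  imports Defs
begin

lemma sum_dvd_two:
  fixes f :: "nat \<Rightarrow> complex"
  assumes m: "m > 1" and z: "\<And>a. a dvd m \<Longrightarrow> a \<noteq> 1 \<Longrightarrow> a \<noteq> m \<Longrightarrow> f a = 0"
  shows "(\<Sum>a\<in>{a. a dvd m}. f a) = f 1 + f m"
proof -
  have "(\<Sum>a\<in>{a. a dvd m}. f a) = (\<Sum>a\<in>{1,m}. f a)"
    by (rule sum.mono_neutral_right) (use m z in auto)
  also have "\<dots> = f 1 + f m" using m by simp
  finally show ?thesis .
qed

lemma sum_dvd_one:
  fixes f :: "nat \<Rightarrow> complex"
  assumes m: "m > 0" and c: "c dvd m" and z: "\<And>a. a dvd m \<Longrightarrow> a \<noteq> c \<Longrightarrow> f a = 0"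
  shows "(\<Sum>a\<in>{a. a dvd m}. f a) = f c"
proof -
  have "(\<Sum>a\<in>{a. a dvd m}. f a) = (\<Sum>a\<in>{c}. f a)"
    by (rule sum.mono_neutral_right) (use m z c in auto)
  then show ?thesis by simp
qed

lemma pk_gt1: "prime (p::nat) \<Longrightarrow> k \<ge> 1 \<Longrightarrow> p ^ k > 1"
proof -
  assume p: "prime p" and k: "k \<ge> 1"
  have "1 < p" using prime_gt_1_nat[OF p] .
  then show ?thesis using one_less_power[of p k] k by simp
qed

definition Fq :: "nat \<Rightarrow> complex \<Rightarrow> nat \<Rightarrow> complex" where
  "Fq q t n = (if n = 1 then 1 else if n = q then t else 0)"

lemma Fq_q: "q \<noteq> 1 \<Longrightarrow> Fq q t q = t" by (simp add: Fq_def)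

lemma Fq_mult_gen:
  assumes q1: "q \<noteq> 1" and nq: "\<And>a b. a > 1 \<Longrightarrow> b > 1 \<Longrightarrow> coprime a b \<Longrightarrow> a * b \<noteq> q"
  shows "Fq q t \<in> multM"
  unfolding multM_def
proof (safe)
  show "Fq q t 1 = 1" by (simp add: Fq_def)
next
  fix a b :: nat assume a: "a > 0" and b: "b > 0" and cop: "coprime a b"
  show "Fq q t (a * b) = Fq q t a * Fq q t b"
  proof (cases "a = 1 \<or> b = 1")
    case True
    with q1 show ?thesis by (auto simp: Fq_def)
  next
    case False
    then have a1: "a > 1" "b > 1" using a b by auto
    have ab: "a \<noteq> b" using cop a1 by auto
    have "Fq q t (a * b) = 0" using nq[OF a1 cop] a1 by (simp add: Fq_def)
    moreover have "Fq q t a * Fq q t b = 0"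
    proof (cases "a = q")
      case True then have "b \<noteq> q" using ab by simp
      then have "Fq q t b = 0" using a1 by (simp add: Fq_def)
      then show ?thesis by simp
    next
      case False then have "Fq q t a = 0" using a1 by (simp add: Fq_def)
      then show ?thesis by simp
    qed
    ultimately show ?thesis by simp
  qed
qed

lemma Fq_mult:
  assumes p: "prime p" and k: "k \<ge> 1"
  shows "Fq (p^k) t \<in> multM"
proof (rule Fq_mult_gen)
  show "p ^ k \<noteq> 1" using pk_gt1[OF p k] by linarith
next
  fix a b :: nat assume a1: "a > 1" "b > 1" and cop: "coprime a b"
  show "a * b \<noteq> p ^ k"
  proof
    assume e: "a * b = p ^ k"
    then have "a dvd p^k" "b dvd p^k" by (metis dvd_triv_left dvd_triv_right)+
    then obtain i j where ij: "i \<le> k" "a = p^i" "j \<le> k" "b = p^j"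
      using divides_primepow_nat[OF p] by blast
    have i0: "i \<noteq> 0" using ij(2) a1(1) by (cases i) auto
    have j0: "j \<noteq> 0" using ij(4) a1(2) by (cases j) auto
    have "p dvd a" using ij(2) i0 by (simp add: dvd_power)
    moreover have "p dvd b" using ij(4) j0 by (simp add: dvd_power)
    ultimately have "p dvd a" "p dvd b" by auto
    with cop p show False
      by (metis coprime_common_divisor not_prime_unit)
  qed
qed

lemma wconv_Fq_left:
  assumes q: "q > 1"
  shows "wconv W (Fq q t) G q = G q * W 1 q + t * G 1 * W q 1"
proof -
  have "wconv W (Fq q t) G q = (\<Sum>a\<in>{a. a dvd q}. Fq q t a * G (q div a) * W a (q div a))"
    using q by (simp add: wconv_def)
  also have "\<dots> = G q * W 1 q + t * G 1 * W q 1"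
    by (subst sum_dvd_two[OF q]) (use q in \<open>auto simp: Fq_def\<close>)
  finally show ?thesis .
qed

lemma wconv_Fq_right:
  assumes q: "q > 1"
  shows "wconv W G (Fq q t) q = G q * W q 1 + G 1 * t * W 1 q"
proof -
  have "wconv W G (Fq q t) q = (\<Sum>a\<in>{a. a dvd q}. G a * Fq q t (q div a) * W a (q div a))"
    using q by (simp add: wconv_def)
  also have "\<dots> = G q * W q 1 + G 1 * t * W 1 q"
  proof (subst sum_dvd_two[OF q])
    fix a assume "a dvd q" "a \<noteq> 1" "a \<noteq> q"
    then have "q div a \<noteq> 1" "q div a \<noteq> q" using q
      by (auto elim!: dvdE simp: mult.commute[of a])
    then show "G a * Fq q t (q div a) * W a (q div a) = 0" by (simp add: Fq_def)
  next
    show "G 1 * Fq q t (q div 1) * W 1 (q div 1) + G q * Fq q t (q div q) * W q (q div q) =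
      G q * W q 1 + G 1 * t * W 1 q" using q by (simp add: Fq_def)
  qed
  finally show ?thesis .
qed

lemma decomp:
  assumes m1: "m > (1::nat)"
  shows "\<exists>p k r. prime p \<and> k \<ge> 1 \<and> r > 0 \<and> r < m \<and> coprime (p^k) r \<and> m = p^k * r"
proof -
  have "m \<noteq> 1" using m1 by simp
  then obtain p where p: "prime p" "p dvd m" using prime_factor_nat[of m] by blast
  define k where "k = multiplicity p m"
  define r where "r = m div p ^ k"
  have pkd: "p ^ k dvd m" unfolding k_def by (rule multiplicity_dvd)
  have r: "m = p ^ k * r" unfolding r_def using pkd by simp
  have nd: "\<not> p dvd r" unfolding r_def k_def using multiplicity_decompose[where p=p and x=m] m1 prime_gt_1_nat[OF p(1)]
    by simp
  have k: "k \<ge> 1"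
  proof -
    have "multiplicity p m > 0" using p(2) multiplicity_gt_zero_iff[where p=p and x=m] m1 prime_gt_1_nat[OF p(1)] by simp
    then show ?thesis unfolding k_def by simp
  qed
  have r0: "r > 0"
  proof (rule ccontr)
    assume "\<not> r > 0" then have "r = 0" by simp
    then show False using nd by simp
  qed
  have pk: "p ^ k > 1" using pk_gt1[OF p(1) k] .
  have "r < m"
  proof -
    have "1 * r < p ^ k * r" using pk r0 by (rule mult_strict_right_mono)
    then show ?thesis using r by simp
  qed
  moreover have "coprime p r" using nd p(1) by (simp add: prime_imp_coprime)
  then have "coprime (p ^ k) r" by simp
  ultimately show ?thesis using p k r r0 by blast
qed

lemma mult_eq_one:
  assumes H: "H \<in> multM" and pp: "\<And>p k. prime p \<Longrightarrow> k \<ge> 1 \<Longrightarrow> H (p^k) = c"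
    and c: "c = 0 \<or> c = 1"
  shows "m > 0 \<Longrightarrow> H m = (if m = 1 then 1 else c)"
proof (induction m rule: less_induct)
  case (less m)
  show ?case
  proof (cases "m = 1")
    case True then show ?thesis using H by (simp add: multM_def)
  next
    case False
    with less.prems have "m > 1" by simp
    then obtain p k r where d: "prime p" "k \<ge> 1" "r > 0" "r < m" "coprime (p^k) r" "m = p^k * r"
      using decomp by blast
    have hm: "\<And>a b. a > 0 \<Longrightarrow> b > 0 \<Longrightarrow> coprime a b \<Longrightarrow> H (a*b) = H a * H b"
      using H by (simp add: multM_def)
    have "p ^ k > 0" using d(1) by (simp add: prime_gt_0_nat)
    then have "H m = H (p^k) * H r" using hm[OF _ d(3) d(5)] d(6) by simp
    also have "\<dots> = c * H r" using pp d by simp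
    also have "\<dots> = c" using less.IH[OF d(4) d(3)] c by auto
    finally show ?thesis using False by simp
  qed
qed

theorem mainTheorem6:
  fixes W :: "nat \<Rightarrow> nat \<Rightarrow> complex"
  assumes closed: "\<forall>F G. F \<in> multM \<longrightarrow> G \<in> multM \<longrightarrow> wconv W F G \<in> multM"
    and comm: "\<forall>F G. F \<in> multM \<longrightarrow> G \<in> multM \<longrightarrow>
                 (\<forall>m>0. wconv W F G m = wconv W G F m)"
  shows "((\<exists>E\<in>multM. \<forall>F\<in>multM. \<forall>m>0. wconv W F E m = F m \<and> wconv W E F m = F m)
            \<longleftrightarrow> (\<forall>(p::nat) n. prime p \<longrightarrow> W 1 (p ^ n) = 1))
         \<and> (\<forall>E\<in>multM. (\<forall>F\<in>multM. \<forall>m>0. wconv W F E m = F m \<and> wconv W E F m = F m)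
              \<longrightarrow> (\<forall>m>0. E m = delta1 m))"
proof -
  have key: "W 1 1 = 1 \<and> (\<forall>p k. prime p \<longrightarrow> k \<ge> 1 \<longrightarrow> W 1 (p^k) = 1 \<and> E (p^k) = 0)"
    if E: "E \<in> multM" and id: "\<forall>F\<in>multM. \<forall>m>0. wconv W F E m = F m \<and> wconv W E F m = F m"
    for E
  proof (intro conjI allI impI)
    have E1: "E 1 = 1" using E by (simp add: multM_def)
    have "Fq 2 1 \<in> multM" using Fq_mult[of 2 1] by simp
    then have "wconv W (Fq 2 1) E 1 = 1" using id by (simp add: Fq_def)
    moreover have "wconv W (Fq 2 1) E 1 = E 1 * W 1 1" by (simp add: wconv_def Fq_def)
    ultimately show "W 1 1 = 1" using E1 by simp
  next
    fix p k :: nat assume p: "prime p" and k: "k \<ge> 1"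
    have q: "p^k > 1" using pk_gt1[OF p k] .
    have E1: "E 1 = 1" using E by (simp add: multM_def)
    have m0: "Fq (p^k) 0 \<in> multM" and m1: "Fq (p^k) 1 \<in> multM" using Fq_mult p k by auto
    have q0: "p^k > 0" using q by linarith
    have i0r: "wconv W E (Fq (p^k) 0) (p^k) = Fq (p^k) 0 (p^k)" using id m0 q0 by blast
    have i1r: "wconv W E (Fq (p^k) 1) (p^k) = Fq (p^k) 1 (p^k)" using id m1 q0 by blast
    have i0l: "wconv W (Fq (p^k) 0) E (p^k) = Fq (p^k) 0 (p^k)" using id m0 q0 by blast
    have qq: "Fq (p^k) t (p^k) = t" for t using q Fq_q[of "p^k" t] by linarith
    have a: "E (p^k) * W (p^k) 1 + E 1 * 0 * W 1 (p^k) = 0"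
      using i0r wconv_Fq_right[OF q, of W E 0] qq[of 0] by simp
    have b: "E (p^k) * W (p^k) 1 + E 1 * 1 * W 1 (p^k) = 1"
      using i1r wconv_Fq_right[OF q, of W E 1] qq[of 1] by simp
    have c: "E (p^k) * W 1 (p^k) + 0 * E 1 * W (p^k) 1 = 0"
      using i0l wconv_Fq_left[OF q, of W 0 E] qq[of 0] by simp
    have a': "E (p^k) * W (p^k) 1 = 0" using a by simp
    have b': "E (p^k) * W (p^k) 1 + W 1 (p^k) = 1" using b E1 by simp
    show W: "W 1 (p^k) = 1" using b' unfolding a' by simp
    show "E (p^k) = 0" using c W by simp
  qed
  have part2: "\<forall>m>0. E m = delta1 m"
    if E: "E \<in> multM" and id: "\<forall>F\<in>multM. \<forall>m>0. wconv W F E m = F m \<and> wconv W E F m = F m"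
    for E
    using mult_eq_one[OF E, of 0] key[OF E id] by (auto simp: delta1_def)
  have d1: "delta1 \<in> multM" by (auto simp: multM_def delta1_def)
  have o1: "(\<lambda>_. 1) \<in> multM" by (simp add: multM_def)
  have conv: "(\<forall>(p::nat) n. prime p \<longrightarrow> W 1 (p ^ n) = 1) \<Longrightarrow>
     (\<exists>E\<in>multM. \<forall>F\<in>multM. \<forall>m>0. wconv W F E m = F m \<and> wconv W E F m = F m)"
  proof -
    assume h: "\<forall>(p::nat) n. prime p \<longrightarrow> W 1 (p ^ n) = 1"
    have L: "wconv W delta1 (\<lambda>_. 1) m = W 1 m" if "m > 0" for m
      unfolding wconv_def using that by (subst sum_dvd_one[of m 1]) (auto simp: delta1_def)
    have R: "wconv W (\<lambda>_. 1) delta1 m = W m 1" if "m > 0" for m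
    proof -
      have "wconv W (\<lambda>_. 1) delta1 m = (\<Sum>a\<in>{a. a dvd m}. 1 * delta1 (m div a) * W a (m div a))"
        using that by (simp add: wconv_def)
      also have "\<dots> = 1 * delta1 (m div m) * W m (m div m)"
      proof (rule sum_dvd_one[OF that])
        fix a assume "a dvd m" "a \<noteq> m"
        then have "m div a \<noteq> 1" using that by (auto elim!: dvdE)
        then show "1 * delta1 (m div a) * W a (m div a) = 0" by (simp add: delta1_def)
      qed simp
      finally show ?thesis using that by (simp add: delta1_def)
    qed
    have Hm: "wconv W delta1 (\<lambda>_. 1) \<in> multM" using closed d1 o1 by blast
    have H1: "\<And>m. m > 0 \<Longrightarrow> wconv W delta1 (\<lambda>_. 1) m = (if m = 1 then 1 else 1)"
    proof (rule mult_eq_one[OF Hm, of 1])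
      fix p k :: nat assume p: "prime p" and k: "k \<ge> 1"
      have "p ^ k > 0" using p by (simp add: prime_gt_0_nat)
      then show "wconv W delta1 (\<lambda>_. 1) (p ^ k) = 1" using L h p by metis
    qed simp_all
    have W1: "W 1 m = 1" if "m > 0" for m using H1[OF that] L[OF that] by simp
    have W2: "W m 1 = 1" if "m > 0" for m
      using comm d1 o1 that L[OF that] R[OF that] W1[OF that] by metis
    show ?thesis
    proof (intro bexI[of _ delta1] ballI allI impI conjI)
      fix F :: "nat \<Rightarrow> complex" and m :: nat assume F: "F \<in> multM" and m: "m > 0"
      have "wconv W F delta1 m = (\<Sum>a\<in>{a. a dvd m}. F a * delta1 (m div a) * W a (m div a))"
        using m by (simp add: wconv_def)
      also have "\<dots> = F m * delta1 (m div m) * W m (m div m)"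
      proof (rule sum_dvd_one[OF m])
        fix a assume "a dvd m" "a \<noteq> m"
        then have "m div a \<noteq> 1" using m by (auto elim!: dvdE)
        then show "F a * delta1 (m div a) * W a (m div a) = 0" by (simp add: delta1_def)
      qed simp
      finally show "wconv W F delta1 m = F m" using m W2 by (simp add: delta1_def)
      have "wconv W delta1 F m = (\<Sum>a\<in>{a. a dvd m}. delta1 a * F (m div a) * W a (m div a))"
        using m by (simp add: wconv_def)
      also have "\<dots> = delta1 1 * F (m div 1) * W 1 (m div 1)"
        by (rule sum_dvd_one[OF m]) (auto simp: delta1_def)
      finally show "wconv W delta1 F m = F m" using m W1 by (simp add: delta1_def)
    qed (rule d1)
  qed
  have fwd: "(\<exists>E\<in>multM. \<forall>F\<in>multM. \<forall>m>0. wconv W F E m = F m \<and> wconv W E F m = F m) \<Longrightarrow>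
     (\<forall>(p::nat) n. prime p \<longrightarrow> W 1 (p ^ n) = 1)"
  proof (intro allI impI)
    fix p n :: nat assume ex: "\<exists>E\<in>multM. \<forall>F\<in>multM. \<forall>m>0. wconv W F E m = F m \<and> wconv W E F m = F m"
      and p: "prime p"
    then obtain E where "E \<in> multM" "\<forall>F\<in>multM. \<forall>m>0. wconv W F E m = F m \<and> wconv W E F m = F m"
      by blast
    from key[OF this] p show "W 1 (p ^ n) = 1" by (cases "n = 0") auto
  qed
  show ?thesis using fwd conv part2 by blast
qed

end
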